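(* Let $\mathcal{L}$ be a GSOS language (a signature of operators together with a set of GSOS rules over labels $\Delta_\tau$) that is in the simply WB cool format. Then the GSOS law $\rho:\Sigma(\mathrm{Id}\times T)\Rightarrow T\Sigma^{*}$ on $\mathbf{Set}$ induced by $\mathcal{L}$, with $T=\mathcal{P}_c(\Delta_\tau\times\mathrm{Id})$ carrying the monad structure described below (equivalently its extension $\lambda:\Sigma^{*}(\mathrm{Id}\times T)\Rightarrow T\Sigma^{*}$ with $\rho=\lambda\circ\theta$), satisfies continuity, unitality and observability.
   Context: Labels: $\Delta_\tau=\Delta\cup\overline{\Delta}\cup\{\tau\}$ with $\tau$ the internal action. $\Sigma$ is the polynomial $\mathbf{Set}$-functor of the signature, $\Sigma^{*}X$ the set of terms over $X$, $\theta:\Sigma\Rightarrow\Sigma^{*}$ the inclusion of one-layer terms. $\mathcal{P}_c$ is the countable powerset. The monad $T=\mathcal{P}_c(\Delta_\tau\times\mathrm{Id})$ has unit $\eta(x)=\{(\tau,x)\}$ and Kleisli composition $(g\diamond f)(x)=\{(\delta,z)\mid (\delta_1,y)\in f(x),(\delta_2,z)\in g(y),\ \text{and }(\delta_1=\tau,\delta=\delta_2)\text{ or }(\delta_2=\tau,\delta=\delta_1)\}$; Kleisli hom-sets are ordered pointwise by inclusion ($f\le g$ iff $f(x)\subseteq g(x)$ for all $x$), with joins and suprema of chains given by pointwise unions. For a Kleisli endomorphism $\alpha:X\to TX$ its rt-closure is $\alpha^{*}=\bigvee_{n<\omega}(\eta_X\vee\alpha)^n$ (Kleisli powers). GSOS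 rules have the form $\frac{\{x_i\xrightarrow{c}y\}\ \cup\ \{x_i\not\xrightarrow{c}\}}{o(x_1,\dots,x_n)\xrightarrow{\alpha}t}$ with distinct variables, $t$ a term over the $x_i$ and the premise targets $y$; the induced law sends $o((x_1,W_1),\dots,(x_n,W_n))$ (with $W_i\subseteq\Delta_\tau\times X$) to the set of all $(\alpha,t[\ldots])$ obtained from rules of $o$ whose premises are satisfied by the $W_i$ (positive premise $x_i\xrightarrow{c}y$ satisfied by choosing $(c,y')\in W_i$ and substituting $y'$ for $y$). A rule with premise $x_i\xrightarrow{\tau}y$ and conclusion $o(x_1,\dots,x_n)\xrightarrow{\tau}o(x_1,\dots,x_n)[y/x_i]$ is a patience rule for argument $i$ of $o$. An operator is straight if it has no rule in which a variable occurs more than once in the left-hand sides of the premises; smooth if it is straight and has no rule in which a variable occurs both in the target and in the left-hand side of a premise. Argument $i$ of $o$ is active if some rule of $o$ has $x_i$ as left-hand side of a premise. A variable $x$ is receiving in a term $t$ if $t$ is the target of a rule in which $x$ is the right-hand side of a premise; argument $i$ of $o$ is receiving if some variable $x$ is receiving in a term $t$ having a subterm $o(v_1,\dots,v_n)$ with $x$ occurring in $v_i$. $\mathcal{L}$ is simply WB cool if it is positive (no negative premises) and: (1) all operators are straight; (2) the only rules with $\tau$-premises are patience rules; (3) every active argument of an operator has a patience rule; (4) every receiving argument of an operator has a patience rule; (5) all operators are smooth. For a GSOS law $\lambda$ and $f:X\to TX$, $\lambda_X\circ\Sigma^{*}\langle\mathrm{id},f\rangle$ is a Kleisli endomorphism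 of $\Sigma^{*}X$. Continuity: for every $X$ and ascending chain $f_0\le f_1\le\cdots:X\to TX$, $\lambda_X\circ\Sigma^{*}\langle\mathrm{id},\bigvee_i f_i\rangle=\bigvee_i\lambda_X\circ\Sigma^{*}\langle\mathrm{id},f_i\rangle$. Unitality: for every $f:X\to TX$, $\lambda_X\circ\Sigma^{*}\langle\mathrm{id},\eta_X\vee f\rangle\le(\lambda_X\circ\Sigma^{*}\langle\mathrm{id},f\rangle)^{*}$. Observability: for every $f:X\to TX$, $\lambda_X\circ\Sigma^{*}\langle\mathrm{id},f\diamond f\rangle\le(\lambda_X\circ\Sigma^{*}\langle\mathrm{id},f\rangle)^{*}$. *)

theory Defs
  imports Main "HOL-Library.Countable_Set"
begin

datatype 'd lab = Act 'd | CoAct 'd | Tau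

datatype ('g, 'v) trm = Var 'v | App 'g "('g, 'v) trm list"

fun wf_term :: "('g \<Rightarrow> nat) \<Rightarrow> ('g, 'v) trm \<Rightarrow> bool" where
  "wf_term ar (Var x) = True"
| "wf_term ar (App g ts) = (length ts = ar g \<and> (\<forall>t\<in>set ts. wf_term ar t))"

fun vars :: "('g, 'v) trm \<Rightarrow> 'v set" where
  "vars (Var x) = {x}"
| "vars (App g ts) = (\<Union>t\<in>set ts. vars t)"

fun subterms :: "('g, 'v) trm \<Rightarrow> ('g, 'v) trm set" where
  "subterms (Var x) = {Var x}"
| "subterms (App g ts) = insert (App g ts) (\<Union>t\<in>set ts. subterms t)"

text \<open>Substitution (the Kleisli extension / multiplication of the term monad Sigma-star).\<close>
fun subst :: "('v \<Rightarrow> ('g, 'w) trm) \<Rightarrow> ('g, 'v) trm \<Rightarrow> ('g, 'w) trm" where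
  "subst \<sigma> (Var x) = \<sigma> x"
| "subst \<sigma> (App g ts) = App g (map (subst \<sigma>) ts)"

text \<open>Variables of a GSOS rule for operator g of arity n: PX i is the source
  variable x_i (i < n); PY j is the target y of the j-th positive premise.
  Using positional indices makes all variables automatically distinct.\<close>
datatype rvar = PX nat | PY nat

text \<open>A GSOS rule: operator, positive premises (i, c) meaning x_i -c-> y_j
  (j = position in the list), negative premises (i, c) meaning x_i -/c->,
  action of the conclusion and target term.\<close>
datatype ('g, 'd) rule =
  Rule (rop: 'g) (rpos: "(nat \<times> 'd lab) list") (rneg: "(nat \<times> 'd lab) list")
       (ract: "'d lab") (rtgt: "('g, rvar) trm")

definition wf_rule :: "('g \<Rightarrow> nat) \<Rightarrow> ('g, 'd) rule \<Rightarrow> bool" where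
  "wf_rule ar r \<longleftrightarrow>
     (\<forall>(i, c)\<in>set (rpos r @ rneg r). i < ar (rop r)) \<and>
     wf_term ar (rtgt r) \<and>
     (\<forall>v\<in>vars (rtgt r). case v of PX i \<Rightarrow> i < ar (rop r) | PY j \<Rightarrow> j < length (rpos r))"

text \<open>A GSOS language: a signature (arity function) and a set of well-formed rules.
  The rule set is countable, so that the induced law lands in the countable powerset.\<close>
definition gsos_language :: "('g \<Rightarrow> nat) \<Rightarrow> ('g, 'd) rule set \<Rightarrow> bool" where
  "gsos_language ar R \<longleftrightarrow> countable R \<and> (\<forall>r\<in>R. wf_rule ar r)"

definition eta :: "'x \<Rightarrow> ('d lab \<times> 'x) set" where
  "eta x = {(Tau, x)}"

definition kcomp :: "('y \<Rightarrow> ('d lab \<times> 'z) set) \<Rightarrow> ('x \<Rightarrow> ('d lab \<times> 'y) set)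
                      \<Rightarrow> 'x \<Rightarrow> ('d lab \<times> 'z) set" where
  "kcomp g f x = {(\<delta>, z) | \<delta> z. \<exists>\<delta>1 y \<delta>2. (\<delta>1, y) \<in> f x \<and> (\<delta>2, z) \<in> g y \<and>
                        ((\<delta>1 = Tau \<and> \<delta> = \<delta>2) \<or> (\<delta>2 = Tau \<and> \<delta> = \<delta>1))}"

definition kmap :: "('x \<Rightarrow> ('d lab \<times> 'y) set) \<Rightarrow> bool" where
  "kmap f \<longleftrightarrow> (\<forall>x. countable (f x))"

fun kpow :: "('x \<Rightarrow> ('d lab \<times> 'x) set) \<Rightarrow> nat \<Rightarrow> 'x \<Rightarrow> ('d lab \<times> 'x) set" where
  "kpow \<alpha> 0 = eta"
| "kpow \<alpha> (Suc n) = kcomp \<alpha> (kpow \<alpha> n)"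

definition rtc :: "('x \<Rightarrow> ('d lab \<times> 'x) set) \<Rightarrow> 'x \<Rightarrow> ('d lab \<times> 'x) set" where
  "rtc \<alpha> x = (\<Union>n. kpow (\<lambda>y. eta y \<union> \<alpha> y) n x)"

text \<open>rho_Y : Sigma(Id \<times> T) Y \<rightarrow> T Sigma* Y, applied to g((y_1,W_1),...,(y_n,W_n)).\<close>
definition rho :: "('g, 'd) rule set \<Rightarrow> 'g \<Rightarrow> ('y \<times> ('d lab \<times> 'y) set) list
                    \<Rightarrow> ('d lab \<times> ('g, 'y) trm) set" where
  "rho R g args =
     {(ract r, subst (\<lambda>v. case v of PX i \<Rightarrow> Var (fst (args ! i)) | PY j \<Rightarrow> Var (us ! j)) (rtgt r))
      | r us. r \<in> R \<and> rop r = g \<and>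
        (\<forall>(i, c)\<in>set (rneg r). \<not> (\<exists>u. (c, u) \<in> snd (args ! i))) \<and>
        length us = length (rpos r) \<and>
        (\<forall>j < length (rpos r). (snd (rpos r ! j), us ! j) \<in> snd (args ! fst (rpos r ! j)))}"

text \<open>lam R f = lambda_X \<circ> Sigma*<id, f> : Sigma* X \<rightarrow> T Sigma* X, where lambda is the
  canonical extension of rho to Sigma* (so that rho = lambda \<circ> theta).\<close>
fun lam :: "('g, 'd) rule set \<Rightarrow> ('x \<Rightarrow> ('d lab \<times> 'x) set) \<Rightarrow> ('g, 'x) trm
             \<Rightarrow> ('d lab \<times> ('g, 'x) trm) set" where
  "lam R f (Var x) = {(c, Var y) | c y. (c, y) \<in> f x}"
| "lam R f (App g ts) =
     {(c, subst id t) | c t. (c, t) \<in> rho R g (zip ts (map (lam R f) ts))}"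

definition positive :: "('g, 'd) rule set \<Rightarrow> bool" where
  "positive R \<longleftrightarrow> (\<forall>r\<in>R. rneg r = [])"

definition premise_lhs :: "('g, 'd) rule \<Rightarrow> nat list" where
  "premise_lhs r = map fst (rpos r @ rneg r)"

definition patience_rule :: "('g \<Rightarrow> nat) \<Rightarrow> 'g \<Rightarrow> nat \<Rightarrow> ('g, 'd) rule \<Rightarrow> bool" where
  "patience_rule ar g i r \<longleftrightarrow>
     rop r = g \<and> rpos r = [(i, Tau)] \<and> rneg r = [] \<and> ract r = Tau \<and>
     rtgt r = App g (map (\<lambda>k. if k = i then Var (PY 0) else Var (PX k)) [0..<ar g])"

definition straight_op :: "('g, 'd) rule set \<Rightarrow> 'g \<Rightarrow> bool" where
  "straight_op R g \<longleftrightarrow> (\<forall>r\<in>R. rop r = g \<longrightarrow> distinct (premise_lhs r))"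

definition smooth_op :: "('g, 'd) rule set \<Rightarrow> 'g \<Rightarrow> bool" where
  "smooth_op R g \<longleftrightarrow> straight_op R g \<and>
     (\<forall>r\<in>R. rop r = g \<longrightarrow> (\<forall>i\<in>set (premise_lhs r). PX i \<notin> vars (rtgt r)))"

definition active_arg :: "('g, 'd) rule set \<Rightarrow> 'g \<Rightarrow> nat \<Rightarrow> bool" where
  "active_arg R g i \<longleftrightarrow> (\<exists>r\<in>R. rop r = g \<and> i \<in> set (premise_lhs r))"

definition receiving_arg :: "('g, 'd) rule set \<Rightarrow> 'g \<Rightarrow> nat \<Rightarrow> bool" where
  "receiving_arg R g i \<longleftrightarrow>
     (\<exists>r\<in>R. \<exists>j < length (rpos r). \<exists>vs. App g vs \<in> subterms (rtgt r) \<and>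
        i < length vs \<and> PY j \<in> vars (vs ! i))"

definition has_patience :: "('g \<Rightarrow> nat) \<Rightarrow> ('g, 'd) rule set \<Rightarrow> 'g \<Rightarrow> nat \<Rightarrow> bool" where
  "has_patience ar R g i \<longleftrightarrow> (\<exists>r\<in>R. patience_rule ar g i r)"

definition simply_wb_cool :: "('g \<Rightarrow> nat) \<Rightarrow> ('g, 'd) rule set \<Rightarrow> bool" where
  "simply_wb_cool ar R \<longleftrightarrow>
     positive R \<and>
     (\<forall>g. straight_op R g) \<and>
     (\<forall>r\<in>R. (\<exists>(i, c)\<in>set (rpos r @ rneg r). c = Tau) \<longrightarrow> patience_rule ar (rop r) (fst (hd (rpos r))) r) \<and>
     (\<forall>g i. active_arg R g i \<longrightarrow> has_patience ar R g i) \<and>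
     (\<forall>g i. receiving_arg R g i \<longrightarrow> has_patience ar R g i) \<and>
     (\<forall>g. smooth_op R g)"

end

theory Submission
  imports Defs
begin

lemma subst_subst: "subst \<tau> (subst \<sigma> t) = subst (\<lambda>v. subst \<tau> (\<sigma> v)) t"
  by (induction t) auto

lemma subst_cong: "(\<forall>v\<in>vars t. \<sigma> v = \<sigma>' v) \<Longrightarrow> subst \<sigma> t = subst \<sigma>' t"
  by (induction t) auto

lemma wf_rule_idx: "wf_rule ar r \<Longrightarrow> j < length (rpos r) \<Longrightarrow> fst (rpos r ! j) < ar (rop r)"
proof -
  assume a: "wf_rule ar r" "j < length (rpos r)"
  then have "(fst (rpos r ! j), snd (rpos r ! j)) \<in> set (rpos r @ rneg r)" by simp
  then show ?thesis using a(1) unfolding wf_rule_def by blast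
qed

definition tsub :: "('g,'x) trm list \<Rightarrow> ('g,'x) trm list \<Rightarrow> rvar \<Rightarrow> ('g,'x) trm" where
  "tsub ts us v = (case v of PX i \<Rightarrow> ts!i | PY j \<Rightarrow> us!j)"

lemma lam_App_iff:
  assumes "gsos_language ar R" "positive R" "length ts = ar g"
  shows "(c,u) \<in> lam R f (App g ts) \<longleftrightarrow> (\<exists>r us. r \<in> R \<and> rop r = g \<and> length us = length (rpos r) \<and>
     (\<forall>j<length (rpos r). (snd (rpos r!j), us!j) \<in> lam R f (ts ! fst (rpos r ! j))) \<and>
     c = ract r \<and> u = subst (tsub ts us) (rtgt r))" (is "?L \<longleftrightarrow> ?R")
proof
  assume "?L"
  then obtain t where u: "u = subst id t" and ct: "(c,t) \<in> rho R g (zip ts (map (lam R f) ts))" by auto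
  then obtain r us where r: "r \<in> R" "rop r = g" "length us = length (rpos r)"
    and prem: "\<forall>j<length (rpos r). (snd (rpos r ! j), us ! j) \<in> snd (zip ts (map (lam R f) ts) ! fst (rpos r ! j))"
    and c: "c = ract r"
    and t: "t = subst (\<lambda>v. case v of PX i \<Rightarrow> Var (fst (zip ts (map (lam R f) ts) ! i)) | PY j \<Rightarrow> Var (us ! j)) (rtgt r)"
    unfolding rho_def by blast
  have wr: "wf_rule ar r" using assms(1) r(1) unfolding gsos_language_def by auto
  have idx: "fst (rpos r ! j) < length ts" if "j < length (rpos r)" for j
    using wf_rule_idx[OF wr that] r(2) assms(3) by simp
  have vx: "\<forall>v\<in>vars (rtgt r). case v of PX i \<Rightarrow> i < length ts | PY j \<Rightarrow> True"
    using wr r(2) assms(3) unfolding wf_rule_def by (auto split: rvar.splits)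
  have "u = subst (tsub ts us) (rtgt r)"
    unfolding u t subst_subst
    by (rule subst_cong) (use vx in \<open>auto simp: tsub_def split: rvar.splits\<close>)
  moreover have "\<forall>j<length (rpos r). (snd (rpos r!j), us!j) \<in> lam R f (ts ! fst (rpos r ! j))"
    using prem idx by auto
  ultimately show ?R using r c by blast
next
  assume ?R
  then obtain r us where r: "r \<in> R" "rop r = g" "length us = length (rpos r)"
    and prem: "\<forall>j<length (rpos r). (snd (rpos r!j), us!j) \<in> lam R f (ts ! fst (rpos r ! j))"
    and c: "c = ract r" and u: "u = subst (tsub ts us) (rtgt r)" by blast
  have wr: "wf_rule ar r" using assms(1) r(1) unfolding gsos_language_def by auto
  have neg: "rneg r = []" using assms(2) r(1) unfolding positive_def by auto
  have idx: "fst (rpos r ! j) < length ts" if "j < length (rpos r)" for j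
    using wf_rule_idx[OF wr that] r(2) assms(3) by simp
  have vx: "\<forall>v\<in>vars (rtgt r). case v of PX i \<Rightarrow> i < length ts | PY j \<Rightarrow> True"
    using wr r(2) assms(3) unfolding wf_rule_def by (auto split: rvar.splits)
  define t where "t = subst (\<lambda>v. case v of PX i \<Rightarrow> Var (fst (zip ts (map (lam R f) ts) ! i)) | PY j \<Rightarrow> Var (us ! j)) (rtgt r)"
  have ut: "u = subst id t"
    unfolding u t_def subst_subst
    by (rule subst_cong) (use vx in \<open>auto simp: tsub_def split: rvar.splits\<close>)
  have "(c,t) \<in> rho R g (zip ts (map (lam R f) ts))"
    unfolding rho_def t_def c mem_Collect_eq
  proof (intro exI conjI)
    show "r \<in> R" "rop r = g" "length us = length (rpos r)" by (fact r)+
    show "\<forall>(i, c)\<in>set (rneg r). \<not> (\<exists>u. (c, u) \<in> snd (zip ts (map (lam R f) ts) ! i))" using neg by simp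
    show "\<forall>j<length (rpos r). (snd (rpos r ! j), us ! j) \<in> snd (zip ts (map (lam R f) ts) ! fst (rpos r ! j))"
      using prem idx by simp
  qed simp
  then show ?L using ut by auto
qed

definition tstep :: "('x \<Rightarrow> ('d lab \<times> 'x) set) \<Rightarrow> 'x \<Rightarrow> 'x \<Rightarrow> bool" where
  "tstep \<alpha> x y \<longleftrightarrow> (Tau, y) \<in> \<alpha> x"

abbreviation taus where "taus \<alpha> \<equiv> (tstep \<alpha>)\<^sup>*\<^sup>*"

definition weak :: "('x \<Rightarrow> ('d lab \<times> 'x) set) \<Rightarrow> 'd lab \<Rightarrow> 'x \<Rightarrow> 'x \<Rightarrow> bool" where
  "weak \<alpha> c x y \<longleftrightarrow> (c = Tau \<and> taus \<alpha> x y) \<or>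
     (c \<noteq> Tau \<and> (\<exists>a b. taus \<alpha> x a \<and> (c, b) \<in> \<alpha> a \<and> taus \<alpha> b y))"

lemma weak_intro: "taus \<alpha> x a \<Longrightarrow> (c,b) \<in> \<alpha> a \<Longrightarrow> taus \<alpha> b y \<Longrightarrow> weak \<alpha> c x y"
proof -
  assume a: "taus \<alpha> x a" "(c,b) \<in> \<alpha> a" "taus \<alpha> b y"
  show ?thesis
  proof (cases "c = Tau")
    case True
    then have "tstep \<alpha> a b" using a(2) by (simp add: tstep_def)
    then have "taus \<alpha> x y" using a(1,3)
      by (meson rtranclp.rtrancl_into_rtrancl rtranclp_trans)
    then show ?thesis using True by (simp add: weak_def)
  next
    case False then show ?thesis using a unfolding weak_def by blast
  qed
qed

lemma weak_trans: "taus \<alpha> x a \<Longrightarrow> weak \<alpha> c a b \<Longrightarrow> taus \<alpha> b y \<Longrightarrow> weak \<alpha> c x y"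
  unfolding weak_def by (meson rtranclp_trans)

lemma weak_tau: "weak \<alpha> Tau x y \<longleftrightarrow> taus \<alpha> x y"
  unfolding weak_def by simp

lemma kpow_weak: "(c,y) \<in> kpow (\<lambda>y. eta y \<union> \<alpha> y) n x \<Longrightarrow> weak \<alpha> c x y"
proof (induction n arbitrary: c y)
  case 0
  then show ?case by (simp add: eta_def weak_def)
next
  case (Suc n)
  from Suc.prems obtain d1 y1 d2 where a: "(d1, y1) \<in> kpow (\<lambda>y. eta y \<union> \<alpha> y) n x"
    "(d2, y) \<in> eta y1 \<union> \<alpha> y1" "(d1 = Tau \<and> c = d2) \<or> (d2 = Tau \<and> c = d1)"
    by (simp add: kcomp_def) blast
  have w: "weak \<alpha> d1 x y1" using Suc.IH a(1) by blast
  show ?case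
  proof (cases "(d2, y) \<in> eta y1")
    case True
    then have "d2 = Tau" "y = y1" by (auto simp: eta_def)
    then show ?thesis using a(3) w by auto
  next
    case False
    then have st: "(d2, y) \<in> \<alpha> y1" using a(2) by auto
    show ?thesis
    proof (cases "d2 = Tau")
      case True
      then have "tstep \<alpha> y1 y" using st by (simp add: tstep_def)
      then have "taus \<alpha> y1 y" by blast
      moreover have "c = d1" using a(3) True by auto
      ultimately show ?thesis using weak_trans[OF rtranclp.rtrancl_refl w] by blast
    next
      case False
      then have "d1 = Tau" "c = d2" using a(3) by auto
      then show ?thesis using w st weak_intro[of \<alpha> x y1 d2 y y] by (simp add: weak_tau)
    qed
  qed
qed


lemma kpow_ext: "taus \<alpha> b y \<Longrightarrow> (c,b) \<in> kpow (\<lambda>y. eta y \<union> \<alpha> y) n x \<Longrightarrow>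
   \<exists>m. (c,y) \<in> kpow (\<lambda>y. eta y \<union> \<alpha> y) m x"
proof (induction rule: rtranclp_induct)
  case base
  then show ?case by blast
next
  case (step z w)
  then obtain m where "(c, z) \<in> kpow (\<lambda>y. eta y \<union> \<alpha> y) m x" by blast
  moreover have "(Tau, w) \<in> eta z \<union> \<alpha> z" using step(2) by (simp add: tstep_def)
  ultimately have "(c, w) \<in> kpow (\<lambda>y. eta y \<union> \<alpha> y) (Suc m) x"
    unfolding kpow.simps kcomp_def by blast
  then show ?case by blast
qed

lemma weak_kpow: "weak \<alpha> c x y \<Longrightarrow> \<exists>m. (c,y) \<in> kpow (\<lambda>y. eta y \<union> \<alpha> y) m x"
proof -
  assume "weak \<alpha> c x y"
  then consider "c = Tau" "taus \<alpha> x y" | a b where "taus \<alpha> x a" "(c, b) \<in> \<alpha> a" "taus \<alpha> b y"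
    unfolding weak_def by blast
  then show ?thesis
  proof cases
    case 1
    have "(Tau, x) \<in> kpow (\<lambda>y. eta y \<union> \<alpha> y) 0 x" by (simp add: eta_def)
    then show ?thesis using kpow_ext[OF 1(2)] 1(1) by blast
  next
    case 2
    have "(Tau, x) \<in> kpow (\<lambda>y. eta y \<union> \<alpha> y) 0 x" by (simp add: eta_def)
    then obtain m where "(Tau, a) \<in> kpow (\<lambda>y. eta y \<union> \<alpha> y) m x" using kpow_ext[OF 2(1)] by blast
    then have "(c, b) \<in> kpow (\<lambda>y. eta y \<union> \<alpha> y) (Suc m) x" using 2(2) unfolding kpow.simps kcomp_def by blast
    then show ?thesis using kpow_ext[OF 2(3)] by blast
  qed
qed

lemma rtc_iff: "(c,y) \<in> rtc \<alpha> x \<longleftrightarrow> weak \<alpha> c x y"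
proof
  assume "(c,y) \<in> rtc \<alpha> x"
  then obtain n where "(c,y) \<in> kpow (\<lambda>y. eta y \<union> \<alpha> y) n x" unfolding rtc_def by blast
  then show "weak \<alpha> c x y" by (rule kpow_weak)
next
  assume "weak \<alpha> c x y"
  then obtain n where "(c,y) \<in> kpow (\<lambda>y. eta y \<union> \<alpha> y) n x" using weak_kpow[OF \<open>weak \<alpha> c x y\<close>] by blast
  then show "(c,y) \<in> rtc \<alpha> x" unfolding rtc_def by blast
qed

lemma var_taus: "taus f x y \<Longrightarrow> taus (lam R f) (Var x) (Var y)"
proof (induction rule: rtranclp_induct)
  case base then show ?case by simp
next
  case (step z w)
  then have "tstep (lam R f) (Var z) (Var w)" by (simp add: tstep_def)
  then show ?case using step(3) by (rule rtranclp.rtrancl_into_rtrancl[rotated])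
qed

lemma var_weak: "weak f c x y \<Longrightarrow> weak (lam R f) c (Var x) (Var y)"
proof -
  assume "weak f c x y"
  then consider "c = Tau" "taus f x y" | a b where "taus f x a" "(c, b) \<in> f a" "taus f b y"
    unfolding weak_def by blast
  then show ?thesis
  proof cases
    case 1 then show ?thesis using var_taus[of f x y R] by (simp add: weak_tau)
  next
    case 2
    have "(c, Var b) \<in> lam R f (Var a)" using 2(2) by simp
    then show ?thesis using weak_intro[OF var_taus[OF 2(1)] _ var_taus[OF 2(3)]] by blast
  qed
qed

context
  fixes ar :: "'g \<Rightarrow> nat" and R :: "('g, 'd) rule set"
  assumes gl: "gsos_language ar R" and pos: "positive R"
begin

lemma patience_step:
  assumes hp: "has_patience ar R g i" and len: "length ts = ar g" and i: "i < ar g"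
    and st: "(Tau, s') \<in> lam R f (ts!i)"
  shows "(Tau, App g (ts[i:=s'])) \<in> lam R f (App g ts)"
proof -
  obtain r where r: "r \<in> R" "patience_rule ar g i r" using hp unfolding has_patience_def by blast
  have pr: "rop r = g" "rpos r = [(i, Tau)]" "ract r = Tau"
    "rtgt r = App g (map (\<lambda>k. if k = i then Var (PY 0) else Var (PX k)) [0..<ar g])"
    using r(2) unfolding patience_rule_def by auto
  have sb: "subst (tsub ts [s']) (rtgt r) = App g (ts[i:=s'])"
    unfolding pr(4) using len i
    by (simp add: tsub_def list_eq_iff_nth_eq nth_list_update)
  then show ?thesis
    unfolding lam_App_iff[OF gl pos len]
    proof (intro exI[of _ r] exI[of _ "[s']"] conjI)
    show "\<forall>j<length (rpos r). (snd (rpos r ! j), [s'] ! j) \<in> lam R f (ts ! fst (rpos r ! j))"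
      using st pr(2) by simp
  qed (use r(1) pr sb in auto)
qed

lemma patience_taus:
  assumes "taus (lam R f) s s'" and hp: "has_patience ar R g i" and len: "length ts = ar g" and i: "i < ar g"
  shows "taus (lam R f) (App g (ts[i:=s])) (App g (ts[i:=s']))"
  using assms(1)
proof (induction rule: rtranclp_induct)
  case base then show ?case by simp
next
  case (step z w)
  have "(Tau, App g ((ts[i:=z])[i:=w])) \<in> lam R f (App g (ts[i:=z]))"
    using patience_step[OF hp _ i, of "ts[i:=z]" w f] len i step(2) by (simp add: tstep_def)
  then have "tstep (lam R f) (App g (ts[i:=z])) (App g (ts[i:=w]))" by (simp add: tstep_def)
  then show ?case using step(3) by (rule rtranclp.rtrancl_into_rtrancl[rotated])
qed

lemma multi_lift:
  assumes len: "length ts = ar g" "length ts' = ar g"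
    and h: "\<forall>k<ar g. taus (lam R f) (ts!k) (ts'!k) \<and> (ts!k \<noteq> ts'!k \<longrightarrow> has_patience ar R g k)"
  shows "taus (lam R f) (App g ts) (App g ts')"
proof -
  define mid where "mid n = map (\<lambda>k. if k < n then ts'!k else ts!k) [0..<ar g]" for n
  have "n \<le> ar g \<Longrightarrow> taus (lam R f) (App g ts) (App g (mid n))" for n
  proof (induction n)
    case 0
    have "mid 0 = ts" unfolding mid_def using len by (simp add: list_eq_iff_nth_eq)
    then show ?case by simp
  next
    case (Suc n)
    have lm: "length (mid n) = ar g" unfolding mid_def by simp
    have e1: "mid (Suc n) = (mid n)[n := ts'!n]" using Suc.prems
      by (simp add: mid_def list_eq_iff_nth_eq nth_list_update)
    have e2: "mid n = (mid n)[n := ts!n]" using Suc.prems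
      by (simp add: mid_def list_eq_iff_nth_eq nth_list_update)
    have ih: "taus (lam R f) (App g ts) (App g (mid n))" using Suc by simp
    show ?case
    proof (cases "ts!n = ts'!n")
      case True
      then show ?thesis using ih e1 e2 by simp
    next
      case False
      then have "has_patience ar R g n" "taus (lam R f) (ts!n) (ts'!n)" using h Suc.prems by auto
      from patience_taus[OF this(2) this(1) lm] Suc.prems
      have "taus (lam R f) (App g (mid n)) (App g (mid (Suc n)))" using e1 e2 by simp
      then show ?thesis using ih by (rule rtranclp_trans[rotated])
    qed
  qed
  moreover have "mid (ar g) = ts'" unfolding mid_def using len by (simp add: list_eq_iff_nth_eq)
  ultimately show ?thesis by blast
qed

lemma subterms_self: "t \<in> subterms t"
  by (cases t) auto

lemma subterms_sub: "s \<in> set ts \<Longrightarrow> subterms s \<subseteq> subterms (App g ts)"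
  by (simp add: UN_upper subset_insertI2)

lemma subst_diff: "subst \<sigma> t \<noteq> subst \<sigma>' t \<Longrightarrow> \<exists>v\<in>vars t. \<sigma> v \<noteq> \<sigma>' v"
  using subst_cong[of t \<sigma> \<sigma>'] by blast

lemma ctx_lift:
  "wf_term ar t \<Longrightarrow> (\<forall>v\<in>vars t. taus (lam R f) (\<sigma> v) (\<sigma>' v)) \<Longrightarrow>
   (\<forall>h vs k v. App h vs \<in> subterms t \<longrightarrow> k < length vs \<longrightarrow> v \<in> vars (vs!k) \<longrightarrow> \<sigma> v \<noteq> \<sigma>' v \<longrightarrow> has_patience ar R h k) \<Longrightarrow>
   taus (lam R f) (subst \<sigma> t) (subst \<sigma>' t)"
proof (induction t)
  case (Var x)
  then show ?case by simp
next
  case (App h vs)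
  have len: "length vs = ar h" using App.prems(1) by simp
  show ?case
    unfolding subst.simps
  proof (rule multi_lift)
    show "length (map (subst \<sigma>) vs) = ar h" "length (map (subst \<sigma>') vs) = ar h" using len by simp_all
    show "\<forall>k<ar h. taus (lam R f) (map (subst \<sigma>) vs ! k) (map (subst \<sigma>') vs ! k) \<and>
        (map (subst \<sigma>) vs ! k \<noteq> map (subst \<sigma>') vs ! k \<longrightarrow> has_patience ar R h k)"
    proof (intro allI impI conjI)
      fix k assume k: "k < ar h"
      then have mem: "vs!k \<in> set vs" using len by simp
      have "taus (lam R f) (subst \<sigma> (vs!k)) (subst \<sigma>' (vs!k))"
      proof (rule App.IH[OF mem])
        show "wf_term ar (vs!k)" using App.prems(1) mem by simp
        show "\<forall>v\<in>vars (vs!k). taus (lam R f) (\<sigma> v) (\<sigma>' v)" using App.prems(2) mem by auto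
        show "\<forall>h vs' k' v. App h vs' \<in> subterms (vs!k) \<longrightarrow> k' < length vs' \<longrightarrow> v \<in> vars (vs'!k') \<longrightarrow> \<sigma> v \<noteq> \<sigma>' v \<longrightarrow> has_patience ar R h k'"
          using App.prems(3) subterms_sub[OF mem, of h] by (meson subsetD)
      qed
      then show "taus (lam R f) (map (subst \<sigma>) vs ! k) (map (subst \<sigma>') vs ! k)" using k len by simp
      assume "map (subst \<sigma>) vs ! k \<noteq> map (subst \<sigma>') vs ! k"
      then have "subst \<sigma> (vs!k) \<noteq> subst \<sigma>' (vs!k)" using k len by simp
      then obtain v where "v \<in> vars (vs!k)" "\<sigma> v \<noteq> \<sigma>' v" using subst_diff by blast
      then show "has_patience ar R h k"
        using App.prems(3) k len subterms_self[of "App h vs"] by (metis)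
    qed
  qed
qed

end

lemma subterms_vars: "s \<in> subterms t \<Longrightarrow> vars s \<subseteq> vars t"
proof (induction t)
  case (Var x) then show ?case by simp
next
  case (App g ts)
  show ?case
  proof (cases "s = App g ts")
    case True then show ?thesis by simp
  next
    case False
    then obtain t' where t': "t' \<in> set ts" "s \<in> subterms t'" using App.prems by auto
    have "vars s \<subseteq> vars t'" using App.IH[OF t'] .
    also have "\<dots> \<subseteq> vars (App g ts)" using t'(1) by (simp add: UN_upper)
    finally show ?thesis .
  qed
qed

context
  fixes ar :: "'g \<Rightarrow> nat" and R :: "('g, 'd) rule set"
  assumes gl: "gsos_language ar R" and cool: "simply_wb_cool ar R"
begin

lemma pos: "positive R" using cool unfolding simply_wb_cool_def by simp

lemma fire:
  assumes r: "r \<in> R" "rop r = g" and len: "length ts = ar g" and lu: "length us = length (rpos r)"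
    and prem: "\<forall>j<length (rpos r). weak (lam R f) (snd (rpos r ! j)) (ts ! fst (rpos r ! j)) (us!j)"
  shows "weak (lam R f) (ract r) (App g ts) (subst (tsub ts us) (rtgt r))"
proof -
  have wr: "wf_rule ar r" using gl r(1) unfolding gsos_language_def by auto
  have neg: "rneg r = []" using pos r(1) unfolding positive_def by auto
  show ?thesis
  proof (cases "\<exists>j<length (rpos r). snd (rpos r ! j) = Tau")
    case True
    then obtain j where j: "j < length (rpos r)" "snd (rpos r ! j) = Tau" by blast
    have "\<exists>(i, c)\<in>set (rpos r @ rneg r). c = Tau"
      using j by (metis (mono_tags, lifting) Un_iff case_prodI2 nth_mem set_append split_pairs)
    then have pr: "patience_rule ar g (fst (hd (rpos r))) r"
      using cool r unfolding simply_wb_cool_def by blast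
    define i where "i = fst (hd (rpos r))"
    have pr': "rpos r = [(i, Tau)]" "ract r = Tau"
      "rtgt r = App g (map (\<lambda>k. if k = i then Var (PY 0) else Var (PX k)) [0..<ar g])"
      using pr unfolding patience_rule_def i_def by auto
    have i: "i < ar g" using wf_rule_idx[OF wr, of 0] pr' r(2) by simp
    have hp: "has_patience ar R g i" using r(1) pr unfolding has_patience_def i_def by blast
    have us: "us = [us!0]" using lu pr' by (cases us) auto
    have sb: "subst (tsub ts us) (rtgt r) = App g (ts[i:=us!0])"
      unfolding pr'(3) using len i
      by (simp add: tsub_def list_eq_iff_nth_eq nth_list_update)
    have tt: "taus (lam R f) (ts!i) (us!0)" using prem pr' by (simp add: weak_tau)
    have "taus (lam R f) (App g (ts[i:=ts!i])) (App g (ts[i:=us!0]))"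
      using patience_taus[OF gl pos tt hp len i] .
    then show ?thesis using sb pr' by (simp add: weak_tau)
  next
    case False
    define n where "n = length (rpos r)"
    define ps where "ps = map fst (rpos r)"
    have dps: "distinct ps" using cool r neg unfolding simply_wb_cool_def straight_op_def premise_lhs_def ps_def
      by auto
    have lps: "length ps = n" unfolding ps_def n_def by simp
    have "\<forall>j. \<exists>p. j < n \<longrightarrow> taus (lam R f) (ts ! (ps!j)) (fst p) \<and> (snd (rpos r ! j), snd p) \<in> lam R f (fst p)
        \<and> taus (lam R f) (snd p) (us!j)"
    proof (intro allI)
      fix j
      show "\<exists>p. j < n \<longrightarrow> taus (lam R f) (ts ! (ps!j)) (fst p) \<and> (snd (rpos r ! j), snd p) \<in> lam R f (fst p)
        \<and> taus (lam R f) (snd p) (us!j)"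
      proof (cases "j < n")
        case True
        then have "weak (lam R f) (snd (rpos r ! j)) (ts ! (ps!j)) (us!j)" "snd (rpos r ! j) \<noteq> Tau"
          using prem False unfolding n_def ps_def by auto
        then show ?thesis unfolding weak_def by auto
      qed simp
    qed
    then obtain AB where AB: "\<And>j. j < n \<Longrightarrow> taus (lam R f) (ts ! (ps!j)) (fst (AB j)) \<and> (snd (rpos r ! j), snd (AB j)) \<in> lam R f (fst (AB j))
        \<and> taus (lam R f) (snd (AB j)) (us!j)"
      by metis
    have psb: "ps!j < ar g" if "j < n" for j
      using wf_rule_idx[OF wr, of j] that r(2) unfolding ps_def n_def by simp
    define ts' where "ts' = map (\<lambda>k. if k \<in> set ps then fst (AB (THE j. j < n \<and> ps!j = k)) else ts!k) [0..<ar g]"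
    have lts': "length ts' = ar g" unfolding ts'_def by simp
    have the_j: "(THE j'. j' < n \<and> ps!j' = ps!j) = j" if "j < n" for j
      using that dps lps by (auto intro!: the_equality simp: nth_eq_iff_index_eq)
    have ts'_in: "ts' ! (ps!j) = fst (AB j)" if "j < n" for j
      using that psb[OF that] the_j[OF that] lps unfolding ts'_def by auto
    have ts'_out: "ts' ! k = ts ! k" if "k < ar g" "k \<notin> set ps" for k
      using that unfolding ts'_def by simp
    have step1: "taus (lam R f) (App g ts) (App g ts')"
    proof (rule multi_lift[OF gl pos len lts'], intro allI impI conjI)
      fix k assume k: "k < ar g"
      show "taus (lam R f) (ts ! k) (ts' ! k)"
      proof (cases "k \<in> set ps")
        case True
        then obtain j where j: "j < n" "k = ps!j" using lps by (metis in_set_conv_nth)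
        then show ?thesis using ts'_in AB by simp
      next
        case False then show ?thesis using ts'_out k by simp
      qed
      assume "ts ! k \<noteq> ts' ! k"
      then have "k \<in> set ps" using ts'_out k by metis
      then have "active_arg R g k" unfolding active_arg_def premise_lhs_def ps_def using r by auto
      then show "has_patience ar R g k" using cool unfolding simply_wb_cool_def by blast
    qed
    define B' where "B' = map (\<lambda>j. snd (AB j)) [0..<n]"
    have step2: "(ract r, subst (tsub ts' B') (rtgt r)) \<in> lam R f (App g ts')"
      unfolding lam_App_iff[OF gl pos lts']
    proof (intro exI[of _ r] exI[of _ B'] conjI)
      show "\<forall>j<length (rpos r). (snd (rpos r ! j), B' ! j) \<in> lam R f (ts' ! fst (rpos r ! j))"
      proof (intro allI impI)
        fix j assume "j < length (rpos r)"
        then have j: "j < n" unfolding n_def .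
        have "fst (rpos r ! j) = ps ! j" using j unfolding ps_def n_def by simp
        then show "(snd (rpos r ! j), B' ! j) \<in> lam R f (ts' ! fst (rpos r ! j))"
          using ts'_in[OF j] AB[OF j] j unfolding B'_def by simp
      qed
    qed (use r in \<open>auto simp: B'_def n_def\<close>)
    have vx: "\<forall>v\<in>vars (rtgt r). case v of PX i \<Rightarrow> i < ar g | PY j \<Rightarrow> j < n"
      using wr r(2) unfolding wf_rule_def n_def by auto
    have smooth: "\<forall>i\<in>set ps. PX i \<notin> vars (rtgt r)"
      using cool r neg unfolding simply_wb_cool_def smooth_op_def premise_lhs_def ps_def by auto
    have step3: "subst (tsub ts' B') (rtgt r) = subst (tsub ts B') (rtgt r)"
    proof (rule subst_cong, intro ballI)
      fix v assume v: "v \<in> vars (rtgt r)"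
      show "tsub ts' B' v = tsub ts B' v"
      proof (cases v)
        case (PX k)
        then show ?thesis using vx v smooth ts'_out by (force simp: tsub_def)
      qed (simp add: tsub_def)
    qed
    have step4: "taus (lam R f) (subst (tsub ts B') (rtgt r)) (subst (tsub ts us) (rtgt r))"
    proof (rule ctx_lift[OF gl pos])
      show "wf_term ar (rtgt r)" using wr unfolding wf_rule_def by simp
      show "\<forall>v\<in>vars (rtgt r). taus (lam R f) (tsub ts B' v) (tsub ts us v)"
      proof
        fix v assume v: "v \<in> vars (rtgt r)"
        show "taus (lam R f) (tsub ts B' v) (tsub ts us v)"
        proof (cases v)
          case (PY j)
          then have "j < n" using vx v by auto
          then show ?thesis using AB PY unfolding tsub_def B'_def by simp
        qed (simp add: tsub_def)
      qed
      show "\<forall>h vs k v. App h vs \<in> subterms (rtgt r) \<longrightarrow> k < length vs \<longrightarrow> v \<in> vars (vs ! k) \<longrightarrow>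
          tsub ts B' v \<noteq> tsub ts us v \<longrightarrow> has_patience ar R h k"
      proof (intro allI impI)
        fix h vs k v
        assume a: "App h vs \<in> subterms (rtgt r)" "k < length vs" "v \<in> vars (vs ! k)" "tsub ts B' v \<noteq> tsub ts us v"
        obtain j where PY: "v = PY j" using a(4) by (cases v) (auto simp: tsub_def)
        have "vars (vs ! k) \<subseteq> vars (App h vs)"
          unfolding vars.simps by (rule UN_upper[OF nth_mem[OF a(2)]])
        then have "vars (vs ! k) \<subseteq> vars (rtgt r)"
          using subterms_vars[OF a(1)] by blast
        then have "PY j \<in> vars (rtgt r)" using a(3) PY by blast
        then have "j < n" using vx by fastforce
        then have "receiving_arg R h k" unfolding receiving_arg_def
          using r(1) a(1,2,3) PY n_def by blast
        then show "has_patience ar R h k" using cool unfolding simply_wb_cool_def by blast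
      qed
    qed
    show ?thesis using weak_intro[OF step1 step2] step4 step3 by simp
  qed
qed

lemma lam_weak:
  assumes hf: "\<forall>x c y. (c,y) \<in> f' x \<longrightarrow> weak f c x y"
  shows "wf_term ar t \<Longrightarrow> (c,u) \<in> lam R f' t \<Longrightarrow> weak (lam R f) c t u"
proof (induction t arbitrary: c u)
  case (Var x)
  then obtain y where "u = Var y" "(c,y) \<in> f' x" by auto
  then show ?case using hf var_weak by metis
next
  case (App g ts)
  have len: "length ts = ar g" using App.prems(1) by simp
  obtain r us where r: "r \<in> R" "rop r = g" "length us = length (rpos r)"
    and prem: "\<forall>j<length (rpos r). (snd (rpos r!j), us!j) \<in> lam R f' (ts ! fst (rpos r ! j))"
    and c: "c = ract r" and u: "u = subst (tsub ts us) (rtgt r)"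
    using App.prems(2) unfolding lam_App_iff[OF gl pos len] by blast
  have wr: "wf_rule ar r" using gl r(1) unfolding gsos_language_def by auto
  have "weak (lam R f) (ract r) (App g ts) (subst (tsub ts us) (rtgt r))"
  proof (rule fire[OF r(1,2) len r(3)], intro allI impI)
    fix j assume j: "j < length (rpos r)"
    have mem: "ts ! fst (rpos r ! j) \<in> set ts" using wf_rule_idx[OF wr j] r(2) len by simp
    show "weak (lam R f) (snd (rpos r ! j)) (ts ! fst (rpos r ! j)) (us ! j)"
      using App.IH[OF mem] App.prems(1) mem prem j by simp
  qed
  then show ?case using c u by simp
qed

end

context
  fixes ar :: "'g \<Rightarrow> nat" and R :: "('g, 'd) rule set"
  assumes gl: "gsos_language ar R" and cool: "simply_wb_cool ar R"
begin

lemma lam_mono: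
  assumes le: "\<forall>x. f x \<subseteq> f' x"
  shows "wf_term ar t \<Longrightarrow> lam R f t \<subseteq> lam R f' t"
proof (induction t)
  case (Var x)
  then show ?case using le by auto
next
  case (App g ts)
  have len: "length ts = ar g" using App.prems(1) by simp
  show ?case
  proof (rule subsetI)
    fix p assume p: "p \<in> lam R f (App g ts)"
    obtain c u where cu: "p = (c,u)" by (cases p)
    obtain r us where r: "r \<in> R" "rop r = g" "length us = length (rpos r)"
      and prem: "\<forall>j<length (rpos r). (snd (rpos r!j), us!j) \<in> lam R f (ts ! fst (rpos r ! j))"
      and c: "c = ract r" and u: "u = subst (tsub ts us) (rtgt r)"
      using p unfolding cu lam_App_iff[OF gl pos[OF gl cool] len] by blast
    have wr: "wf_rule ar r" using gl r(1) unfolding gsos_language_def by auto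
    have "\<forall>j<length (rpos r). (snd (rpos r!j), us!j) \<in> lam R f' (ts ! fst (rpos r ! j))"
    proof (intro allI impI)
      fix j assume j: "j < length (rpos r)"
      have mem: "ts ! fst (rpos r ! j) \<in> set ts" using wf_rule_idx[OF wr j] r(2) len by simp
      show "(snd (rpos r!j), us!j) \<in> lam R f' (ts ! fst (rpos r ! j))"
        using App.IH[OF mem] App.prems(1) mem prem j by auto
    qed
    then show "p \<in> lam R f' (App g ts)"
      unfolding cu lam_App_iff[OF gl pos[OF gl cool] len] using r c u by blast
  qed
qed

lemma lam_cont:
  assumes ch: "\<forall>i x. fs i x \<subseteq> fs (Suc i) x"
  shows "wf_term ar t \<Longrightarrow> lam R (\<lambda>x. \<Union>i. fs i x) t = (\<Union>i. lam R (fs i) t)"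
proof (induction t)
  case (Var x)
  then show ?case by auto
next
  case (App g ts)
  have len: "length ts = ar g" using App.prems(1) by simp
  have mono: "fs m x \<subseteq> fs n x" if "m \<le> n" for m n x
    using that
  proof (induction n)
    case 0 then show ?case by simp
  next
    case (Suc n)
    show ?case
    proof (cases "m = Suc n")
      case True then show ?thesis by simp
    next
      case False
      then have "m \<le> n" using Suc.prems by simp
      then have "fs m x \<subseteq> fs n x" by (rule Suc.IH)
      then show ?thesis using ch by blast
    qed
  qed
  show ?case
  proof
    show "(\<Union>i. lam R (fs i) (App g ts)) \<subseteq> lam R (\<lambda>x. \<Union>i. fs i x) (App g ts)"
    proof (rule UN_least)
      fix i
      show "lam R (fs i) (App g ts) \<subseteq> lam R (\<lambda>x. \<Union>i. fs i x) (App g ts)"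
        by (rule lam_mono[OF _ App.prems(1)]) blast
    qed
  next
    show "lam R (\<lambda>x. \<Union>i. fs i x) (App g ts) \<subseteq> (\<Union>i. lam R (fs i) (App g ts))"
    proof (rule subsetI)
      fix p assume p: "p \<in> lam R (\<lambda>x. \<Union>i. fs i x) (App g ts)"
      obtain c u where cu: "p = (c,u)" by (cases p)
      obtain r us where r: "r \<in> R" "rop r = g" "length us = length (rpos r)"
        and prem: "\<forall>j<length (rpos r). (snd (rpos r!j), us!j) \<in> lam R (\<lambda>x. \<Union>i. fs i x) (ts ! fst (rpos r ! j))"
        and c: "c = ract r" and u: "u = subst (tsub ts us) (rtgt r)"
        using p unfolding cu lam_App_iff[OF gl pos[OF gl cool] len] by blast
      have wr: "wf_rule ar r" using gl r(1) unfolding gsos_language_def by auto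
      have "\<forall>j. \<exists>k. j < length (rpos r) \<longrightarrow> (snd (rpos r!j), us!j) \<in> lam R (fs k) (ts ! fst (rpos r ! j))"
      proof (intro allI)
        fix j
        show "\<exists>k. j < length (rpos r) \<longrightarrow> (snd (rpos r!j), us!j) \<in> lam R (fs k) (ts ! fst (rpos r ! j))"
        proof (cases "j < length (rpos r)")
          case True
          have mem: "ts ! fst (rpos r ! j) \<in> set ts" using wf_rule_idx[OF wr True] r(2) len by simp
          have "(snd (rpos r!j), us!j) \<in> (\<Union>i. lam R (fs i) (ts ! fst (rpos r ! j)))"
            using App.IH[OF mem] App.prems(1) mem prem True by auto
          then show ?thesis by blast
        qed simp
      qed
      from choice[OF this] obtain K where K0: "\<forall>j. j < length (rpos r) \<longrightarrow> (snd (rpos r!j), us!j) \<in> lam R (fs (K j)) (ts ! fst (rpos r ! j))"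
        by blast
      have K: "(snd (rpos r!j), us!j) \<in> lam R (fs (K j)) (ts ! fst (rpos r ! j))" if "j < length (rpos r)" for j
        using K0 that by blast
      define M where "M = (\<Sum>j<length (rpos r). K j)"
      have "\<forall>j<length (rpos r). (snd (rpos r!j), us!j) \<in> lam R (fs M) (ts ! fst (rpos r ! j))"
      proof (intro allI impI)
        fix j assume j: "j < length (rpos r)"
        have mem: "ts ! fst (rpos r ! j) \<in> set ts" using wf_rule_idx[OF wr j] r(2) len by simp
        have "K j \<le> M" unfolding M_def using j by (intro member_le_sum) auto
        then have "\<forall>x. fs (K j) x \<subseteq> fs M x" using mono by blast
        from lam_mono[OF this] App.prems(1) mem K[OF j]
        show "(snd (rpos r!j), us!j) \<in> lam R (fs M) (ts ! fst (rpos r ! j))" by auto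
      qed
      then have "p \<in> lam R (fs M) (App g ts)"
        unfolding cu lam_App_iff[OF gl pos[OF gl cool] len] using r c u by blast
      then show "p \<in> (\<Union>i. lam R (fs i) (App g ts))" by blast
    qed
  qed
qed

end

theorem mainTheorem2:
  fixes ar :: "'o \<Rightarrow> nat" and R :: "('o, 'd) rule set"
  assumes "gsos_language ar R" and "simply_wb_cool ar R"
  shows
    \<comment> \<open>continuity\<close>
    "(\<forall>fs :: nat \<Rightarrow> 'x \<Rightarrow> ('d lab \<times> 'x) set.
        (\<forall>i. kmap (fs i)) \<and> (\<forall>i x. fs i x \<subseteq> fs (Suc i) x) \<longrightarrow>
        (\<forall>t. wf_term ar t \<longrightarrow> lam R (\<lambda>x. \<Union>i. fs i x) t = (\<Union>i. lam R (fs i) t)))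
   \<and> \<comment> \<open>unitality\<close>
     (\<forall>f :: 'x \<Rightarrow> ('d lab \<times> 'x) set. kmap f \<longrightarrow>
        (\<forall>t. wf_term ar t \<longrightarrow> lam R (\<lambda>x. eta x \<union> f x) t \<subseteq> rtc (lam R f) t))
   \<and> \<comment> \<open>observability\<close>
     (\<forall>f :: 'x \<Rightarrow> ('d lab \<times> 'x) set. kmap f \<longrightarrow>
        (\<forall>t. wf_term ar t \<longrightarrow> lam R (kcomp f f) t \<subseteq> rtc (lam R f) t))"
proof (intro conjI allI impI)
  fix fs :: "nat \<Rightarrow> 'x \<Rightarrow> ('d lab \<times> 'x) set" and t :: "('o, 'x) trm"
  assume a: "(\<forall>i. kmap (fs i)) \<and> (\<forall>i x. fs i x \<subseteq> fs (Suc i) x)" "wf_term ar t"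
  show "lam R (\<lambda>x. \<Union>i. fs i x) t = (\<Union>i. lam R (fs i) t)"
    by (rule lam_cont[OF assms conjunct2[OF a(1)] a(2)])
next
  fix f :: "'x \<Rightarrow> ('d lab \<times> 'x) set" and t :: "('o, 'x) trm"
  assume "wf_term ar t"
  have hf: "\<forall>x c y. (c,y) \<in> eta x \<union> f x \<longrightarrow> weak f c x y"
  proof (intro allI impI)
    fix x c y assume "(c,y) \<in> eta x \<union> f x"
    then show "weak f c x y"
    proof
      assume "(c,y) \<in> eta x" then show ?thesis by (simp add: eta_def weak_tau)
    next
      assume "(c,y) \<in> f x" then show ?thesis by (rule weak_intro[OF rtranclp.rtrancl_refl _ rtranclp.rtrancl_refl])
    qed
  qed
  show "lam R (\<lambda>x. eta x \<union> f x) t \<subseteq> rtc (lam R f) t"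
  proof
    fix p assume "p \<in> lam R (\<lambda>x. eta x \<union> f x) t"
    moreover obtain c u where cu: "p = (c,u)" by (cases p)
    ultimately have "(c,u) \<in> lam R (\<lambda>x. eta x \<union> f x) t" by simp
    from lam_weak[OF assms hf \<open>wf_term ar t\<close> this]
    show "p \<in> rtc (lam R f) t" unfolding cu rtc_iff .
  qed
next
  fix f :: "'x \<Rightarrow> ('d lab \<times> 'x) set" and t :: "('o, 'x) trm"
  assume "wf_term ar t"
  have hf: "\<forall>x c y. (c,y) \<in> kcomp f f x \<longrightarrow> weak f c x y"
  proof (intro allI impI)
    fix x c y assume "(c,y) \<in> kcomp f f x"
    then obtain d1 z d2 where a: "(d1, z) \<in> f x" "(d2, y) \<in> f z" "(d1 = Tau \<and> c = d2) \<or> (d2 = Tau \<and> c = d1)"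
      by (simp add: kcomp_def) blast
    then consider "d1 = Tau" "c = d2" | "d2 = Tau" "c = d1" by blast
    then show "weak f c x y"
    proof cases
      case 1
      then have "taus f x z" using a(1) by (simp add: tstep_def r_into_rtranclp)
      then show ?thesis using weak_intro[OF \<open>taus f x z\<close> a(2) rtranclp.rtrancl_refl] 1 by simp
    next
      case 2
      then have "taus f z y" using a(2) by (simp add: tstep_def r_into_rtranclp)
      then show ?thesis using weak_intro[OF rtranclp.rtrancl_refl a(1) \<open>taus f z y\<close>] 2 by simp
    qed
  qed
  show "lam R (kcomp f f) t \<subseteq> rtc (lam R f) t"
  proof
    fix p assume "p \<in> lam R (kcomp f f) t"
    moreover obtain c u where cu: "p = (c,u)" by (cases p)
    ultimately have "(c,u) \<in> lam R (kcomp f f) t" by simp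
    from lam_weak[OF assms hf \<open>wf_term ar t\<close> this]
    show "p \<in> rtc (lam R f) t" unfolding cu rtc_iff .
  qed
qed

end
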